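(* Let the real-valued $f(x)$ possess an entire complex extension $f(z)$, and let $0<\omega<a<\infty$. Then \begin{equation} \int_{0}^{a}\frac{f(x)}{\omega^{2}+x^{2}}\mathrm{d}x = \sum_{k=0}^{\infty}(-1)^{k}\omega^{2k}\,\mathrm{FP}\!\int_{0}^{a}\frac{f(x)}{x^{2k+2}}\mathrm{d}x +\frac{\pi}{2\omega}\mathrm{Re}f(\omega i) - \frac{\ln \omega}{\omega}\mathrm{Im}f(\omega i) . \end{equation}
   Context: $\mathrm{FP}\!\int_0^a g(x)x^{-p}\,\mathrm{d}x$ denotes the (Hadamard) finite part of a possibly divergent integral: for $0<\epsilon<a$ one writes $\int_\epsilon^a g(x)x^{-p}\,\mathrm{d}x = C_\epsilon + D_\epsilon$, where $C_\epsilon$ collects the terms having a finite limit as $\epsilon\to0$ and $D_\epsilon$ the terms diverging in that limit, and sets the finite part equal to $\lim_{\epsilon\to0}C_\epsilon$. *)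

theory Defs
  imports "HOL-Complex_Analysis.Complex_Analysis"
begin

text \<open>Hadamard finite part of \<open>\<integral>_0^a g(x) x^(-p) dx\<close> for natural p:
  \<open>\<integral>_\<epsilon>^a g(x) x^(-p) dx\<close> splits as a part with a finite limit plus the divergent
  terms, which (for the integrands considered) are linear combinations of
  negative powers of \<open>\<epsilon>\<close> and of \<open>ln \<epsilon>\<close>; the finite part is the limit of the rest.\<close>

definition has_finite_part :: "(real \<Rightarrow> real) \<Rightarrow> nat \<Rightarrow> real \<Rightarrow> real \<Rightarrow> bool" where
  "has_finite_part g p a L \<longleftrightarrow>
     (\<exists>(n::nat) (c::nat \<Rightarrow> real) (d::real).
        ((\<lambda>\<epsilon>. integral {\<epsilon>..a} (\<lambda>x. g x / x ^ p)
               - (\<Sum>j=1..n. c j / \<epsilon> ^ j) - d * ln \<epsilon>) \<longlongrightarrow> L) (at_right 0))"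

definition finite_part :: "(real \<Rightarrow> real) \<Rightarrow> nat \<Rightarrow> real \<Rightarrow> real" where
  "finite_part g p a = (THE L. has_finite_part g p a L)"

end

theory Submission
  imports Defs "HOL-Real_Asymp.Real_Asymp"
begin

lemma integral_series:
  fixes g :: "nat \<Rightarrow> real \<Rightarrow> real"
  assumes c: "\<And>n. continuous_on {lo..hi} (g n)"
    and b: "\<And>n x. x \<in> {lo..hi} \<Longrightarrow> \<bar>g n x\<bar> \<le> M n" and s: "summable M"
  shows "(\<lambda>n. integral {lo..hi} (g n)) sums integral {lo..hi} (\<lambda>x. \<Sum>n. g n x)"
proof -
  have u: "uniform_limit {lo..hi} (\<lambda>n x. \<Sum>i<n. g i x) (\<lambda>x. \<Sum>i. g i x) sequentially"
    by (rule Weierstrass_m_test) (use b s in auto)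
  have cc: "\<And>n. continuous_on {lo..hi} (\<lambda>x. \<Sum>i<n. g i x)"
    by (intro continuous_intros c)
  obtain I J where I: "\<And>n. ((\<lambda>x. \<Sum>i<n. g i x) has_integral I n) {lo..hi}"
    and J: "((\<lambda>x. \<Sum>i. g i x) has_integral J) {lo..hi}" and t: "I \<longlonglongrightarrow> J"
    using uniform_limit_integral[OF u cc] by auto
  have gi: "\<And>n. g n integrable_on {lo..hi}"
    using c integrable_continuous_real by blast
  have "I n = (\<Sum>i<n. integral {lo..hi} (g i))" for n
  proof -
    have "((\<lambda>x. \<Sum>i<n. g i x) has_integral (\<Sum>i<n. integral {lo..hi} (g i))) {lo..hi}"
      by (intro has_integral_sum) (use gi in auto)
    then show ?thesis using I has_integral_unique by blast
  qed
  then have "I = (\<lambda>n. \<Sum>i<n. integral {lo..hi} (g i))" by (intro ext)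
  with t have "(\<lambda>n. \<Sum>i<n. integral {lo..hi} (g i)) \<longlonglongrightarrow> J" by simp
  then show ?thesis using integral_unique[OF J] unfolding sums_def by simp
qed

lemma fp_unique_aux:
  fixes e :: "nat \<Rightarrow> real"
  assumes "((\<lambda>t. (\<Sum>j=1..N. e j / t ^ j) + D * ln t) \<longlongrightarrow> C) (at_right 0)"
  shows "C = 0"
  using assms
proof (induction N arbitrary: e D C)
  case 0
  then have l: "((\<lambda>t. D * ln t) \<longlongrightarrow> C) (at_right 0)" by simp
  have "D = 0"
  proof (rule ccontr)
    assume "D \<noteq> 0"
    then have "((\<lambda>t. (D * ln t) / D) \<longlongrightarrow> C / D) (at_right 0)"
      by (intro tendsto_divide l) auto
    then have lnC: "(ln \<longlongrightarrow> C / D) (at_right (0::real))"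
      using \<open>D \<noteq> 0\<close> by simp
    have lb: "filterlim ln at_infinity (at_right (0::real))"
      by (rule filterlim_mono[OF ln_at_0 at_bot_le_at_infinity order_refl])
    show False by (rule not_tendsto_and_filterlim_at_infinity[OF _ lnC lb]) simp
  qed
  with l have "((\<lambda>t. 0) \<longlongrightarrow> C) (at_right (0::real))" by simp
  then show ?case using tendsto_unique[OF _ tendsto_const] by force
next
  case (Suc N)
  define \<phi> where "\<phi> = (\<lambda>t::real. (\<Sum>j=1..Suc N. e j / t ^ j) + D * ln t)"
  have l: "(\<phi> \<longlongrightarrow> C) (at_right 0)" using Suc.prems by (simp add: \<phi>_def)
  have "((\<lambda>t. t ^ Suc N * \<phi> t) \<longlongrightarrow> 0 ^ Suc N * C) (at_right 0)"
    by (intro tendsto_intros l)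
  then have l0: "((\<lambda>t. t ^ Suc N * \<phi> t) \<longlongrightarrow> 0) (at_right 0)" by simp
  have ev: "\<forall>\<^sub>F t in at_right 0. t ^ Suc N * \<phi> t =
      e (Suc N) + (\<Sum>j=1..N. e j * t ^ (Suc N - j)) + D * (t ^ N * (t * ln t))"
  proof (rule eventually_at_right_less[THEN eventually_mono])
    fix t :: real assume "0 < t"
    have "t ^ Suc N * (\<Sum>j=1..N. e j / t ^ j) = (\<Sum>j=1..N. e j * t ^ (Suc N - j))"
      unfolding sum_distrib_left
    proof (rule sum.cong)
      fix j assume "j \<in> {1..N}"
      then have "t ^ Suc N = t ^ (Suc N - j) * t ^ j" by (simp flip: power_add)
      then show "t ^ Suc N * (e j / t ^ j) = e j * t ^ (Suc N - j)" using \<open>0 < t\<close> by simp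
    qed simp
    then show "t ^ Suc N * \<phi> t =
      e (Suc N) + (\<Sum>j=1..N. e j * t ^ (Suc N - j)) + D * (t ^ N * (t * ln t))"
      using \<open>0 < t\<close> by (simp add: \<phi>_def algebra_simps)
  qed
  have tlt: "((\<lambda>t::real. t * ln t) \<longlongrightarrow> 0) (at_right 0)" by real_asymp
  have "((\<lambda>t. e (Suc N) + (\<Sum>j=1..N. e j * t ^ (Suc N - j)) + D * (t ^ N * (t * ln t)))
          \<longlongrightarrow> e (Suc N) + (\<Sum>j=1..N. e j * 0 ^ (Suc N - j)) + D * (0 ^ N * 0)) (at_right 0)"
    using tlt by (intro tendsto_intros)
  moreover have "(\<Sum>j=1..N. e j * (0::real) ^ (Suc N - j)) = 0"
    by (intro sum.neutral) auto
  ultimately have "((\<lambda>t. t ^ Suc N * \<phi> t) \<longlongrightarrow> e (Suc N)) (at_right 0)"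
    using tendsto_cong[OF ev] by (simp only:) simp
  then have "e (Suc N) = 0" using tendsto_unique[OF _ _ l0] by force
  then have "((\<lambda>t. (\<Sum>j=1..N. e j / t ^ j) + D * ln t) \<longlongrightarrow> C) (at_right 0)"
    using l by (simp add: \<phi>_def)
  then show ?case by (rule Suc.IH)
qed

lemma at_Reals_nontriv: "at (complex_of_real x) within \<real> \<noteq> bot"
proof -
  have "complex_of_real x islimpt \<real>"
    unfolding islimpt_approachable
  proof (intro allI impI)
    fix e :: real assume "0 < e"
    show "\<exists>x'\<in>\<real>. x' \<noteq> complex_of_real x \<and> dist x' (complex_of_real x) < e"
      by (rule bexI[of _ "complex_of_real (x + e/2)"]) (use \<open>0 < e\<close> in \<open>auto simp: dist_norm\<close>)
  qed
  then show ?thesis using trivial_limit_within by blast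
qed

lemma deriv_real:
  assumes "G holomorphic_on UNIV" and "\<forall>x::real. G (complex_of_real x) \<in> \<real>"
  shows "deriv G (complex_of_real x) \<in> \<real>"
proof -
  let ?z = "complex_of_real x"
  have "(G has_field_derivative deriv G ?z) (at ?z)"
    using assms(1) by (meson DERIV_deriv_iff_field_differentiable holomorphic_on_imp_differentiable_at open_UNIV UNIV_I)
  then have "(G has_field_derivative deriv G ?z) (at ?z within \<real>)"
    by (rule has_field_derivative_at_within)
  then have t: "((\<lambda>y. (G y - G ?z) / (y - ?z)) \<longlongrightarrow> deriv G ?z) (at ?z within \<real>)"
    by (simp add: has_field_derivative_iff)
  have GR: "y \<in> \<real> \<Longrightarrow> G y \<in> \<real>" for y using assms(2) by (metis Reals_cases)
  have ev: "\<forall>\<^sub>F y in at ?z within \<real>. (G y - G ?z) / (y - ?z) \<in> \<real>"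
    unfolding eventually_at_filter
    by (rule always_eventually) (auto intro!: Reals_divide Reals_diff GR)
  show ?thesis by (rule Lim_in_closed_set[OF closed_complex_Reals ev at_Reals_nontriv t])
qed

lemma iter_deriv_real:
  assumes "F holomorphic_on UNIV" and "\<forall>x::real. F (complex_of_real x) \<in> \<real>"
  shows "(deriv ^^ n) F holomorphic_on UNIV \<and> (\<forall>x::real. (deriv ^^ n) F (complex_of_real x) \<in> \<real>)"
proof (induction n)
  case 0 then show ?case using assms by simp
next
  case (Suc n)
  then show ?case by (auto intro: holomorphic_deriv deriv_real)
qed

lemma entire_real_coeffs:
  assumes "F holomorphic_on UNIV" and "\<forall>x::real. F (complex_of_real x) \<in> \<real>"
  obtains a :: "nat \<Rightarrow> real" where "\<And>z. (\<lambda>n. complex_of_real (a n) * z ^ n) sums F z"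
proof -
  define c where "c n = (deriv ^^ n) F 0 / fact n" for n
  have s: "(\<lambda>n. c n * z ^ n) sums F z" for z
  proof -
    have "(\<lambda>n. (deriv ^^ n) F 0 / fact n * (z - 0) ^ n) sums F z"
      by (rule holomorphic_power_series[where r = "norm z + 1"])
        (use assms(1) in \<open>auto intro: holomorphic_on_subset\<close>)
    then show ?thesis by (simp add: c_def)
  qed
  have "c n \<in> \<real>" for n
  proof -
    have "(deriv ^^ n) F (complex_of_real 0) \<in> \<real>" using iter_deriv_real[OF assms] by blast
    then show ?thesis unfolding c_def by (auto intro!: Reals_divide fact_in_Reals)
  qed
  then have "c n = complex_of_real (Re (c n))" for n by (simp add: complex_is_Real_iff)
  then have "(\<lambda>n. complex_of_real (Re (c n)) * z ^ n) sums F z" for z using s[of z] by (metis (no_types, lifting) ext)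
  then show ?thesis by (rule that)
qed

definition cc :: "real \<Rightarrow> nat \<Rightarrow> nat \<Rightarrow> real" where
  "cc t n p = (if n + 1 = p then ln t else t powr (real n + 1 - real p) / (real n + 1 - real p))"

lemma J_int:
  fixes t b :: real
  assumes "0 < t" "t \<le> b"
  shows "((\<lambda>x. x ^ n / x ^ p) has_integral (cc b n p - cc t n p)) {t..b}"
proof (cases "n + 1 = p")
  case True
  have "((\<lambda>x. x^n/x^p) has_integral (ln b - ln t)) {t..b}"
  proof (rule fundamental_theorem_of_calculus[OF assms(2)])
    fix x assume x: "x \<in> {t..b}"
    then have "x > 0" using assms by auto
    have "(ln has_real_derivative inverse x) (at x)" using \<open>x>0\<close> by (rule DERIV_ln)
    moreover have "inverse x = x^n/x^p" using True \<open>x>0\<close> by (auto simp: field_simps)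
    ultimately show "(ln has_vector_derivative x^n/x^p) (at x within {t..b})"
      by (metis has_field_derivative_at_within has_real_derivative_iff_has_vector_derivative)
  qed
  then show ?thesis using True by (simp add: cc_def)
next
  case False
  define e where "e = real n + 1 - real p"
  have "real (n + 1) \<noteq> real p" using False by linarith
  then have e0: "e \<noteq> 0" unfolding e_def by simp
  have "((\<lambda>x. x^n/x^p) has_integral (b powr e / e - t powr e / e)) {t..b}"
  proof (rule fundamental_theorem_of_calculus[OF assms(2)])
    fix x assume x: "x \<in> {t..b}"
    then have "x > 0" using assms by auto
    have "((\<lambda>x. x powr e / e) has_real_derivative (e * x powr (e - 1)) / e) (at x)"
      by (intro DERIV_cdivide has_real_derivative_powr \<open>x>0\<close>)
    moreover have "(e * x powr (e - 1)) / e = x^n/x^p"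
    proof -
      have "e - 1 = real n - real p" by (simp add: e_def)
      then have "x powr (e-1) = x powr real n / x powr real p" by (simp add: powr_diff)
      also have "\<dots> = x^n/x^p" using \<open>x>0\<close> by (simp add: powr_realpow)
      finally show ?thesis using e0 by simp
    qed
    ultimately show "((\<lambda>x. x powr e / e) has_vector_derivative x^n/x^p) (at x within {t..b})"
      by (metis has_field_derivative_at_within has_real_derivative_iff_has_vector_derivative)
  qed
  then show ?thesis using False by (simp add: cc_def e_def diff_divide_distrib)
qed

lemma cc_bound:
  assumes "0 < t" "t \<le> b" "p \<le> n"
  shows "\<bar>cc t n p\<bar> \<le> t * (b ^ n / b ^ p)"
proof -
  obtain m where n: "n = m + p" using assms(3) le_Suc_ex by (metis add.commute)
  have e: "real n + 1 - real p = real (Suc m)" using n by simp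
  have pw: "t powr (real n + 1 - real p) = t ^ Suc m"
    unfolding e by (rule powr_realpow[OF assms(1)])
  have nq: "n + 1 \<noteq> p" using n by simp
  have "cc t n p = t powr (real n + 1 - real p) / (real n + 1 - real p)"
    unfolding cc_def by (simp only: nq if_False)
  also have "\<dots> = t ^ Suc m / real (Suc m)" by (subst pw) (subst e, rule refl)
  finally have "cc t n p = t ^ Suc m / real (Suc m)" .
  then have "\<bar>cc t n p\<bar> = t ^ Suc m / real (Suc m)" using assms(1) by simp
  also have "\<dots> \<le> t ^ Suc m" using assms(1) by (simp add: divide_le_eq)
  also have "\<dots> = t * t ^ m" by simp
  also have "\<dots> \<le> t * b ^ m" using assms by (intro mult_left_mono power_mono) auto
  also have "b ^ m = b ^ n / b ^ p" using assms n by (simp add: power_add)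
  finally show ?thesis .
qed

lemma cc_summable:
  assumes "0 < t" "t \<le> b" and ab: "summable (\<lambda>n. \<bar>co n\<bar> * b ^ n)"
  shows "summable (\<lambda>n. co n * cc t n p)"
proof (rule summable_comparison_test_ev)
  show "\<forall>\<^sub>F n in sequentially. norm (co n * cc t n p) \<le> \<bar>co n\<bar> * b ^ n * (t / b ^ p)"
  proof (rule eventually_sequentiallyI[of p])
    fix n assume "p \<le> n"
    have "norm (co n * cc t n p) = \<bar>co n\<bar> * \<bar>cc t n p\<bar>" by (simp add: abs_mult)
    also have "\<dots> \<le> \<bar>co n\<bar> * (t * (b ^ n / b ^ p))"
      by (intro mult_left_mono cc_bound) (use assms \<open>p \<le> n\<close> in auto)
    finally show "norm (co n * cc t n p) \<le> \<bar>co n\<bar> * b ^ n * (t / b ^ p)" by (simp add: mult_ac)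
  qed
  show "summable (\<lambda>n. \<bar>co n\<bar> * b ^ n * (t / b ^ p))" by (intro summable_mult2 ab)
qed

lemma fp_series:
  fixes co :: "nat \<Rightarrow> real" and f :: "real \<Rightarrow> real"
  assumes b: "0 < b" and fs: "\<And>x. (\<lambda>n. co n * x^n) sums f x"
    and ab: "summable (\<lambda>n. \<bar>co n\<bar> * b^n)"
  shows "has_finite_part f (Suc q) b (\<Sum>n. co n * cc b n (Suc q))"
proof -
  define p where "p = Suc q"
  define S where "S = (\<Sum>n. co n * cc b n p)"
  define tail where "tail t = (\<Sum>m. co (m+p) * cc t (m+p) p)" for t
  define c where "c j = co (q - j) / real j" for j
  define d where "d = - co q"
  have key: "integral {t..b} (\<lambda>x. f x / x^p) - (\<Sum>j=1..q. c j / t^j) - d * ln t = S - tail t"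
    if t: "0 < t" "t \<le> b" for t
  proof -
    have i1: "(\<lambda>n. integral {t..b} (\<lambda>x. co n * (x^n / x^p))) sums
        integral {t..b} (\<lambda>x. \<Sum>n. co n * (x^n / x^p))"
    proof (rule integral_series[where M = "\<lambda>n. \<bar>co n\<bar> * b ^ n * (1 / t ^ p)"])
      show "continuous_on {t..b} (\<lambda>x. co n * (x ^ n / x ^ p))" for n
        using t by (intro continuous_intros) auto
      show "summable (\<lambda>n. \<bar>co n\<bar> * b ^ n * (1 / t ^ p))" by (intro summable_mult2 ab)
      fix n x assume x: "x \<in> {t..b}"
      have "\<bar>co n * (x ^ n / x ^ p)\<bar> = \<bar>co n\<bar> * (x ^ n / x ^ p)" using x t by (simp add: abs_mult)
      also have "\<dots> \<le> \<bar>co n\<bar> * (b ^ n / t ^ p)"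
        using x t by (intro mult_left_mono frac_le power_mono) auto
      finally show "\<bar>co n * (x ^ n / x ^ p)\<bar> \<le> \<bar>co n\<bar> * b ^ n * (1 / t ^ p)" by simp
    qed
    have i2: "integral {t..b} (\<lambda>x. co n * (x^n / x^p)) = co n * (cc b n p - cc t n p)" for n
      by (rule integral_unique, rule has_integral_mult_right, rule J_int) (use t in auto)
    have i3: "(\<Sum>n. co n * (x^n / x^p)) = f x / x^p" for x
      using sums_divide[OF fs[of x], of "x^p"] by (simp add: sums_iff)
    have "integral {t..b} (\<lambda>x. f x / x^p) = (\<Sum>n. co n * (cc b n p - cc t n p))"
      using i1 unfolding i2 i3 by (simp add: sums_iff)
    also have "\<dots> = S - (\<Sum>n. co n * cc t n p)"
      unfolding S_def right_diff_distrib
      using cc_summable[OF b order_refl ab] cc_summable[OF t ab] by (simp add: suminf_diff)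
    also have "(\<Sum>n. co n * cc t n p) = tail t + (\<Sum>n<p. co n * cc t n p)"
      unfolding tail_def using cc_summable[OF t ab] by (intro suminf_split_initial_segment)
    also have "(\<Sum>n<p. co n * cc t n p) = co q * ln t + (\<Sum>n<q. co n * cc t n p)"
      by (simp add: p_def cc_def)
    also have "(\<Sum>n<q. co n * cc t n p) = - (\<Sum>j=1..q. c j / t^j)"
    proof -
      have "(\<Sum>n<q. co n * cc t n p) = (\<Sum>j=1..q. - (c j / t^j))"
      proof (rule sum.reindex_bij_witness[of _ "\<lambda>j. q - j" "\<lambda>n. q - n"])
        fix n assume n: "n \<in> {..<q}"
        define j where "j = q - n"
        have j: "j \<in> {1..q}" and qj: "q - j = n" using n by (auto simp: j_def)
        have e: "real (q - j) + 1 - real p = - real j" using j by (simp add: p_def of_nat_diff)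
        have nq: "q - j + 1 \<noteq> p" using j by (auto simp add: p_def)
        have "cc t (q - j) p = t powr (real (q - j) + 1 - real p) / (real (q - j) + 1 - real p)"
          unfolding cc_def by (simp only: nq if_False)
        also have "\<dots> = t powr (- real j) / (- real j)" unfolding e ..
        also have "\<dots> = - (1 / t ^ j) / real j" using t by (simp add: powr_minus powr_realpow divide_inverse)
        finally have "co (q - j) * cc t (q - j) p = - (c j / t ^ j)"
          by (simp add: c_def field_simps)
        then show "- (c (q - n) / t ^ (q - n)) = co n * cc t n p" using qj by (simp add: j_def)
      qed auto
      then show ?thesis by (simp add: sum_negf)
    qed
    finally show ?thesis by (simp add: d_def)
  qed
  have K: "summable (\<lambda>m. \<bar>co (m+p)\<bar> * (b^(m+p) / b^p))"
  proof -
    have "summable (\<lambda>m. \<bar>co (m+p)\<bar> * b^(m+p))"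
      using summable_ignore_initial_segment[OF ab, of p] by simp
    then show ?thesis using summable_mult2[of _ "1 / b^p"] by simp
  qed
  define Kc where "Kc = (\<Sum>m. \<bar>co (m+p)\<bar> * (b^(m+p) / b^p))"
  have tail_bd: "norm (tail t) \<le> t * Kc" if t: "0 < t" "t \<le> b" for t
  proof -
    have le: "norm (co (m+p) * cc t (m+p) p) \<le> t * (\<bar>co (m+p)\<bar> * (b^(m+p) / b^p))" for m
    proof -
      have "norm (co (m+p) * cc t (m+p) p) = \<bar>co (m+p)\<bar> * \<bar>cc t (m+p) p\<bar>" by (simp add: abs_mult)
      also have "\<dots> \<le> \<bar>co (m+p)\<bar> * (t * (b^(m+p) / b^p))"
        by (intro mult_left_mono cc_bound) (use t in auto)
      finally show ?thesis by (simp add: algebra_simps)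
    qed
    have s2: "summable (\<lambda>m. t * (\<bar>co (m+p)\<bar> * (b^(m+p) / b^p)))" by (intro summable_mult K)
    have s1: "summable (\<lambda>m. norm (co (m+p) * cc t (m+p) p))"
      by (rule summable_comparison_test[OF _ s2]) (use le in auto)
    have "norm (tail t) \<le> (\<Sum>m. norm (co (m+p) * cc t (m+p) p))"
      unfolding tail_def by (rule summable_norm[OF s1])
    also have "\<dots> \<le> (\<Sum>m. t * (\<bar>co (m+p)\<bar> * (b^(m+p) / b^p)))"
      by (rule suminf_le[OF le s1 s2])
    also have "\<dots> = t * Kc" unfolding Kc_def by (rule suminf_mult[OF K])
    finally show ?thesis .
  qed
  have ev: "\<forall>\<^sub>F t in at_right 0. 0 < t \<and> t \<le> b"
    unfolding eventually_at_right_field using b by (intro exI[of _ b]) auto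
  have "((\<lambda>t. t * Kc) \<longlongrightarrow> 0 * Kc) (at_right 0)" by (intro tendsto_intros)
  then have z: "((\<lambda>t. t * Kc) \<longlongrightarrow> 0) (at_right 0)" by (simp only: mult_zero_left)
  have "\<forall>\<^sub>F t in at_right 0. norm (tail t) \<le> t * Kc"
    by (rule eventually_mono[OF ev]) (elim conjE, rule tail_bd)
  then have "(tail \<longlongrightarrow> 0) (at_right 0)" by (rule Lim_null_comparison[OF _ z])
  then have "((\<lambda>t. S - tail t) \<longlongrightarrow> S - 0) (at_right 0)" by (intro tendsto_intros)
  then have lim: "((\<lambda>t. S - tail t) \<longlongrightarrow> S) (at_right 0)" by (simp only: diff_zero)
  have "((\<lambda>t. integral {t..b} (\<lambda>x. f x / x^p) - (\<Sum>j=1..q. c j / t^j) - d * ln t) \<longlongrightarrow> S) (at_right 0)"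
    by (rule tendsto_cong[THEN iffD1, OF _ lim])
      (rule eventually_mono[OF ev], elim conjE, rule key[symmetric])
  then have "((\<lambda>t. integral {t..b} (\<lambda>x. f x / x^Suc q) - (\<Sum>j=1..q. c j / t^j) - d * ln t) \<longlongrightarrow> (\<Sum>n. co n * cc b n (Suc q))) (at_right 0)"
    unfolding S_def p_def .
  then show ?thesis unfolding has_finite_part_def
    by (intro exI[of _ q] exI[of _ c] exI[of _ d])
qed

lemma sum_extend:
  fixes c :: "nat \<Rightarrow> real"
  assumes "n \<le> N"
  shows "(\<Sum>j=1..n. c j / t^j) = (\<Sum>j=1..N. (if j \<le> n then c j else 0) / t^j)"
proof -
  have "(\<Sum>j=1..n. c j / t^j) = (\<Sum>j=1..n. (if j \<le> n then c j else 0) / t^j)" by simp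
  also have "\<dots> = (\<Sum>j=1..N. (if j \<le> n then c j else 0) / t^j)"
    by (rule sum.mono_neutral_left) (use assms in auto)
  finally show ?thesis .
qed

lemma has_finite_part_unique:
  assumes "has_finite_part g p b L1" "has_finite_part g p b L2"
  shows "L1 = L2"
proof -
  obtain n1 c1 d1 where l1: "((\<lambda>\<epsilon>. integral {\<epsilon>..b} (\<lambda>x. g x / x ^ p)
               - (\<Sum>j=1..n1. c1 j / \<epsilon> ^ j) - d1 * ln \<epsilon>) \<longlongrightarrow> L1) (at_right 0)"
    using assms(1) unfolding has_finite_part_def by blast
  obtain n2 c2 d2 where l2: "((\<lambda>\<epsilon>. integral {\<epsilon>..b} (\<lambda>x. g x / x ^ p)
               - (\<Sum>j=1..n2. c2 j / \<epsilon> ^ j) - d2 * ln \<epsilon>) \<longlongrightarrow> L2) (at_right 0)"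
    using assms(2) unfolding has_finite_part_def by blast
  define N where "N = max n1 n2"
  define e where "e j = (if j \<le> n2 then c2 j else 0) - (if j \<le> n1 then c1 j else 0)" for j
  have "((\<lambda>\<epsilon>. (integral {\<epsilon>..b} (\<lambda>x. g x / x ^ p) - (\<Sum>j=1..n1. c1 j / \<epsilon> ^ j) - d1 * ln \<epsilon>)
     - (integral {\<epsilon>..b} (\<lambda>x. g x / x ^ p) - (\<Sum>j=1..n2. c2 j / \<epsilon> ^ j) - d2 * ln \<epsilon>))
     \<longlongrightarrow> L1 - L2) (at_right 0)"
    by (rule tendsto_diff[OF l1 l2])
  moreover have "(integral {\<epsilon>..b} (\<lambda>x. g x / x ^ p) - (\<Sum>j=1..n1. c1 j / \<epsilon> ^ j) - d1 * ln \<epsilon>)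
     - (integral {\<epsilon>..b} (\<lambda>x. g x / x ^ p) - (\<Sum>j=1..n2. c2 j / \<epsilon> ^ j) - d2 * ln \<epsilon>)
     = (\<Sum>j=1..N. e j / \<epsilon> ^ j) + (d2 - d1) * ln \<epsilon>" for \<epsilon> :: real
  proof -
    have "(\<Sum>j=1..N. e j / \<epsilon> ^ j) = (\<Sum>j=1..N. (if j \<le> n2 then c2 j else 0) / \<epsilon>^j)
        - (\<Sum>j=1..N. (if j \<le> n1 then c1 j else 0) / \<epsilon>^j)"
      unfolding e_def diff_divide_distrib by (rule sum_subtractf)
    also have "\<dots> = (\<Sum>j=1..n2. c2 j / \<epsilon>^j) - (\<Sum>j=1..n1. c1 j / \<epsilon>^j)"
      using sum_extend[of n1 N c1 \<epsilon>] sum_extend[of n2 N c2 \<epsilon>] by (simp add: N_def)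
    finally show ?thesis by (simp add: algebra_simps)
  qed
  ultimately have "((\<lambda>\<epsilon>. (\<Sum>j=1..N. e j / \<epsilon> ^ j) + (d2 - d1) * ln \<epsilon>) \<longlongrightarrow> L1 - L2) (at_right 0)"
    by simp
  then have "L1 - L2 = 0" by (rule fp_unique_aux)
  then show ?thesis by simp
qed

lemma finite_part_eq:
  assumes "has_finite_part g p b L"
  shows "finite_part g p b = L"
  unfolding finite_part_def
  by (rule the_equality[of "\<lambda>L. has_finite_part g p b L", OF assms]) (use has_finite_part_unique assms in blast)

lemma double_series:
  fixes G :: "nat \<Rightarrow> nat \<Rightarrow> real"
  assumes bd: "\<And>n k. \<bar>G n k\<bar> \<le> u n * v k" and su: "summable u" and sv: "summable v"
    and u0: "\<And>n. u n \<ge> 0" and v0: "\<And>k. v k \<ge> 0"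
    and R: "\<And>n. (\<lambda>k. G n k) sums R n" and C: "\<And>k. (\<lambda>n. G n k) sums C k" and X: "R sums X"
  shows "C sums X"
proof -
  define P where "P = (\<lambda>(n::nat, k::nat). u n * v k)"
  have P_abs: "(\<lambda>x. norm (P x)) summable_on (UNIV \<times> UNIV)"
  proof (rule Infinite_Sum.abs_summable_on_Sigma_iff[THEN iffD2], intro conjI ballI)
    fix n :: nat
    have "summable (\<lambda>k. norm (norm (P (n, k))))"
      unfolding P_def using u0 v0 by (simp add: abs_mult summable_mult sv)
    then show "(\<lambda>k. norm (P (n, k))) summable_on UNIV" by (rule norm_summable_imp_summable_on)
  next
    have i: "infsum (\<lambda>k. norm (P (n, k))) UNIV = u n * suminf v" for n
    proof -
      have "((\<lambda>k. norm (P (n, k))) has_sum u n * suminf v) UNIV"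
        unfolding P_def using u0 v0 sv
        by (intro norm_summable_imp_has_sum) (auto simp: abs_mult summable_mult intro!: sums_mult summable_sums)
      then show ?thesis by (rule infsumI)
    qed
    have "summable (\<lambda>n. norm (norm (u n * suminf v)))"
      using u0 v0 su sv suminf_nonneg[OF sv v0] by (simp add: abs_mult summable_mult2)
    then show "(\<lambda>n. norm (infsum (\<lambda>k. norm (P (n, k))) UNIV)) summable_on UNIV"
      unfolding i by (rule norm_summable_imp_summable_on)
  qed
  have Gs: "(\<lambda>(n, k). G n k) summable_on (UNIV \<times> UNIV)"
  proof (rule Infinite_Sum.abs_summable_summable, rule Infinite_Sum.abs_summable_on_comparison_test[OF P_abs])
    fix x :: "nat \<times> nat" show "norm (case x of (n, k) \<Rightarrow> G n k) \<le> norm (P x)"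
      using bd u0 v0 by (cases x) (auto simp: P_def abs_mult)
  qed
  have Rn: "R n = infsum (\<lambda>k. G n k) UNIV" for n
  proof -
    have "summable (\<lambda>k. norm (G n k))"
      by (rule summable_comparison_test[of _ "\<lambda>k. u n * v k"]) (use bd sv in \<open>auto intro: summable_mult\<close>)
    then have "((\<lambda>k. G n k) has_sum R n) UNIV" by (rule norm_summable_imp_has_sum[OF _ R])
    then show ?thesis by (simp add: infsumI)
  qed
  have Ck: "C k = infsum (\<lambda>n. G n k) UNIV" for k
  proof -
    have "summable (\<lambda>n. norm (G n k))"
      by (rule summable_comparison_test[of _ "\<lambda>n. u n * v k"]) (use bd su in \<open>auto intro: summable_mult2\<close>)
    then have "((\<lambda>n. G n k) has_sum C k) UNIV" by (rule norm_summable_imp_has_sum[OF _ C])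
    then show ?thesis by (simp add: infsumI)
  qed
  have Gs': "(\<lambda>(k, n). G n k) summable_on (UNIV \<times> UNIV)"
    using iffD1[OF summable_on_swap Gs] by simp
  have Rsum: "R summable_on UNIV"
    unfolding Rn using summable_on_Sigma_banach[OF Gs] by simp
  have Csum: "C summable_on UNIV"
    unfolding Ck using summable_on_Sigma_banach[OF Gs'] by simp
  have "infsum R UNIV = X"
    using has_sum_imp_sums[OF has_sum_infsum[OF Rsum]] X sums_unique2 by blast
  moreover have "infsum C UNIV = infsum R UNIV"
    unfolding Rn Ck using infsum_swap_banach[of "\<lambda>n k. G n k" UNIV UNIV] Gs by simp
  ultimately show ?thesis using has_sum_imp_sums[OF has_sum_infsum[OF Csum]] by simp
qed

definition W :: "real \<Rightarrow> real \<Rightarrow> nat \<Rightarrow> nat \<Rightarrow> real" where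
  "W \<omega> b n k = (-1) ^ k * \<omega> ^ (2 * k) * cc b n (2 * k + 2)"

definition Tm :: "real \<Rightarrow> real \<Rightarrow> nat \<Rightarrow> real" where
  "Tm \<omega> b n = (\<Sum>k. W \<omega> b n k)"

definition Ii :: "real \<Rightarrow> real \<Rightarrow> nat \<Rightarrow> real" where
  "Ii \<omega> b n = integral {0..b} (\<lambda>x. x ^ n / (\<omega>\<^sup>2 + x\<^sup>2))"

definition Em :: "real \<Rightarrow> nat \<Rightarrow> real" where
  "Em \<omega> n = pi / (2 * \<omega>) * Re ((\<i> * complex_of_real \<omega>) ^ n) - ln \<omega> / \<omega> * Im ((\<i> * complex_of_real \<omega>) ^ n)"

lemma cc_bound2:
  assumes b: "0 < b"
  shows "\<bar>cc b n p\<bar> \<le> (1 + \<bar>ln b\<bar>) * (b ^ n * b / b ^ p)"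
proof (cases "n + 1 = p")
  case True
  then have "b ^ n * b / b ^ p = 1" using b by (simp add: True[symmetric] power_Suc2)
  then show ?thesis using True by (simp add: cc_def)
next
  case False
  define e where "e = real n + 1 - real p"
  have ei: "e = real_of_int (int n + 1 - int p)" by (simp add: e_def)
  have "int n + 1 - int p \<noteq> 0" using False by linarith
  then have "\<bar>int n + 1 - int p\<bar> \<ge> 1" by linarith
  then have e1: "\<bar>e\<bar> \<ge> 1" unfolding ei by (metis of_int_1 of_int_abs of_int_le_iff)
  have pw: "b powr e = b ^ n * b / b ^ p"
  proof -
    have "b powr e = b powr (real (Suc n)) / b powr (real p)"
      by (simp add: e_def powr_diff add_ac)
    also have "\<dots> = b ^ n * b / b ^ p" by (simp only: powr_realpow[OF b]) simp
    finally show ?thesis .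
  qed
  have "\<bar>cc b n p\<bar> = b powr e / \<bar>e\<bar>" using False by (simp add: cc_def e_def)
  also have "\<dots> \<le> b powr e" using divide_left_mono[OF e1, of "b powr e"] e1 by simp
  also have "\<dots> \<le> (1 + \<bar>ln b\<bar>) * b powr e" using mult_right_mono[of 1 "1 + \<bar>ln b\<bar>" "b powr e"] by simp
  finally show ?thesis unfolding pw .
qed

lemma W_bound:
  assumes "0 < \<omega>" "\<omega> < b"
  shows "\<bar>W \<omega> b n k\<bar> \<le> ((1 + \<bar>ln b\<bar>) / b * b ^ n) * ((\<omega> / b)\<^sup>2) ^ k"
proof -
  have b: "0 < b" using assms by simp
  have "\<bar>W \<omega> b n k\<bar> = \<omega> ^ (2 * k) * \<bar>cc b n (2 * k + 2)\<bar>"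
    using assms by (simp add: W_def abs_mult power_abs)
  also have "\<dots> \<le> \<omega> ^ (2 * k) * ((1 + \<bar>ln b\<bar>) * (b ^ n * b / b ^ (2 * k + 2)))"
    using assms by (intro mult_left_mono cc_bound2 b) auto
  also have "\<dots> = ((1 + \<bar>ln b\<bar>) / b * b ^ n) * ((\<omega> / b)\<^sup>2) ^ k"
  proof -
    have 1: "\<omega> ^ (2 * k) = (\<omega> * \<omega>) ^ k" by (simp add: power_mult power2_eq_square)
    have 2: "b ^ (2 * k + 2) = (b * b) ^ k * (b * b)" by (simp add: power_add power_mult power2_eq_square)
    have 3: "((\<omega> / b)\<^sup>2) ^ k = (\<omega> * \<omega>) ^ k / (b * b) ^ k" by (simp add: power_divide power2_eq_square)
    have 4: "(b * b) ^ k \<noteq> 0" using b by simp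
    show ?thesis unfolding 1 2 3 using b 4 by (simp add: field_simps)
  qed
  finally show ?thesis .
qed

lemma W_summable:
  assumes "0 < \<omega>" "\<omega> < b"
  shows "(\<lambda>k. W \<omega> b n k) sums Tm \<omega> b n"
proof -
  have "\<omega> * \<omega> < b * b" using assms by (intro mult_strict_mono) auto
  then have "norm ((\<omega> / b)\<^sup>2) < 1" using assms by (simp add: power_divide power2_eq_square)
  then have "summable (\<lambda>k. ((1 + \<bar>ln b\<bar>) / b * b ^ n) * ((\<omega> / b)\<^sup>2) ^ k)"
    by (intro summable_mult summable_geometric)
  then have "summable (\<lambda>k. W \<omega> b n k)"
    by (rule summable_comparison_test[rotated]) (use W_bound[OF assms] in auto)
  then show ?thesis unfolding Tm_def by (rule summable_sums)
qed

lemma W_shift: "W \<omega> b (n + 2) (Suc k) = - \<omega>\<^sup>2 * W \<omega> b n k"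
proof -
  have "cc b (n + 2) (2 * Suc k + 2) = cc b n (2 * k + 2)"
    unfolding cc_def by simp
  then show ?thesis unfolding W_def by (simp add: power2_eq_square)
qed

lemma W_zero:
  assumes "0 < b"
  shows "W \<omega> b (n + 2) 0 = b ^ (n + 1) / real (n + 1)"
proof -
  have "real (n + 2) + 1 - real (2 * 0 + 2) = real (Suc n)" by simp
  then have "cc b (n + 2) (2 * 0 + 2) = b powr real (Suc n) / real (Suc n)"
    unfolding cc_def by simp
  then show ?thesis using assms by (simp add: W_def powr_add powr_realpow)
qed

lemma T_rec:
  assumes "0 < \<omega>" "\<omega> < b"
  shows "Tm \<omega> b (n + 2) = b ^ (n + 1) / real (n + 1) - \<omega>\<^sup>2 * Tm \<omega> b n"
proof -
  have "(\<lambda>k. - \<omega>\<^sup>2 * W \<omega> b n k) sums (- \<omega>\<^sup>2 * Tm \<omega> b n)"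
    by (rule sums_mult[OF W_summable[OF assms]])
  then have "(\<lambda>k. W \<omega> b (n + 2) (Suc k)) sums (- \<omega>\<^sup>2 * Tm \<omega> b n)"
    by (simp only: W_shift)
  then have "(\<lambda>k. W \<omega> b (n + 2) k) sums (- \<omega>\<^sup>2 * Tm \<omega> b n + W \<omega> b (n + 2) 0)"
    by (simp only: sums_Suc_iff)
  moreover have "(\<lambda>k. W \<omega> b (n + 2) k) sums Tm \<omega> b (n + 2)" by (rule W_summable[OF assms])
  ultimately show ?thesis using sums_unique2 W_zero[of b \<omega> n] assms by fastforce
qed

lemma int_pow:
  assumes "0 \<le> b"
  shows "((\<lambda>x::real. x ^ n) has_integral b ^ (n + 1) / real (n + 1)) {0..b}"
proof -
  have "((\<lambda>x::real. x ^ n) has_integral (b ^ (n + 1) / real (n + 1) - 0 ^ (n + 1) / real (n + 1))) {0..b}"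
  proof (rule fundamental_theorem_of_calculus[OF assms])
    fix x :: real assume "x \<in> {0..b}"
    have "((\<lambda>x. x ^ (n + 1) / real (n + 1)) has_real_derivative (real (n + 1) * x ^ n) / real (n + 1)) (at x)"
      by (intro derivative_eq_intros) auto
    then show "((\<lambda>x. x ^ (n + 1) / real (n + 1)) has_vector_derivative x ^ n) (at x within {0..b})"
      by (simp add: has_real_derivative_iff_has_vector_derivative[symmetric] has_field_derivative_at_within del: of_nat_Suc)
  qed
  then show ?thesis by simp
qed

lemma I_rec:
  assumes "0 < \<omega>" "\<omega> < b"
  shows "Ii \<omega> b (n + 2) = b ^ (n + 1) / real (n + 1) - \<omega>\<^sup>2 * Ii \<omega> b n"
proof -
  have pos: "\<omega>\<^sup>2 + x\<^sup>2 \<noteq> 0" for x :: real using assms by (simp add: add_pos_nonneg)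
  have c: "(\<lambda>x. x ^ n / (\<omega>\<^sup>2 + x\<^sup>2)) integrable_on {0..b}"
    by (intro integrable_continuous_interval continuous_intros) (use pos in auto)
  have eq: "x ^ (n + 2) / (\<omega>\<^sup>2 + x\<^sup>2) = x ^ n - \<omega>\<^sup>2 * (x ^ n / (\<omega>\<^sup>2 + x\<^sup>2))" for x :: real
    using pos[of x] by (simp add: field_simps power2_eq_square)
  have "Ii \<omega> b (n + 2) = integral {0..b} (\<lambda>x. x ^ n - \<omega>\<^sup>2 * (x ^ n / (\<omega>\<^sup>2 + x\<^sup>2)))"
    unfolding Ii_def eq ..
  also have "\<dots> = integral {0..b} (\<lambda>x. x ^ n) - integral {0..b} (\<lambda>x. \<omega>\<^sup>2 * (x ^ n / (\<omega>\<^sup>2 + x\<^sup>2)))"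
  proof (rule integral_diff)
    show "(\<lambda>x. x ^ n) integrable_on {0..b}"
      using int_pow[of b n] assms by (intro has_integral_integrable) auto
    show "(\<lambda>x. \<omega>\<^sup>2 * (x ^ n / (\<omega>\<^sup>2 + x\<^sup>2))) integrable_on {0..b}"
      by (intro integrable_continuous_interval continuous_intros) (use pos in auto)
  qed
  also have "integral {0..b} (\<lambda>x. x ^ n) = b ^ (n + 1) / real (n + 1)"
    using int_pow[of b n] assms by (intro integral_unique) auto
  also have "integral {0..b} (\<lambda>x. \<omega>\<^sup>2 * (x ^ n / (\<omega>\<^sup>2 + x\<^sup>2))) = \<omega>\<^sup>2 * Ii \<omega> b n"
    unfolding Ii_def by (rule integral_mult[OF c, symmetric])
  finally show ?thesis .
qed

lemma E_rec: "Em \<omega> (n + 2) = - \<omega>\<^sup>2 * Em \<omega> n"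
proof -
  have "(\<i> * complex_of_real \<omega>) ^ (n + 2) = complex_of_real (- \<omega>\<^sup>2) * (\<i> * complex_of_real \<omega>) ^ n"
    by (simp add: power_add power2_eq_square algebra_simps)
  then show ?thesis unfolding Em_def by (cases "\<omega> = 0") (simp_all add: field_simps power2_eq_square)
qed

lemma aux0:
  fixes s P Q r \<omega> :: real
  assumes "\<omega> \<noteq> 0" "Q \<noteq> 0" "r \<noteq> 0"
  shows "s * P * (- (1 / Q / r)) = - (1 / \<omega>) * (s * (1 / r * (P * \<omega> / Q)))"
  using assms by (simp add: field_simps)

lemma aux1:
  fixes s P Q r :: real
  assumes "Q \<noteq> 0" "r \<noteq> 0"
  shows "s * P * (- (1 / Q / (2 * r))) = (1/2) * (- (s * (P / Q)) / r)"
  using assms by (simp add: field_simps)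

lemma T0:
  assumes "0 < \<omega>" "\<omega> < b"
  shows "Tm \<omega> b 0 = - (1 / \<omega>) * arctan (\<omega> / b)"
proof -
  have b: "0 < b" using assms by simp
  have x1: "\<bar>\<omega> / b\<bar> \<le> 1" using assms by simp
  have w: "W \<omega> b 0 k = - (1 / \<omega>) * ((-1)^k * (1 / real (k*2+1) * (\<omega> / b) ^ (k*2+1)))" for k
  proof -
    have "cc b 0 (2*k+2) = b powr (- real (2*k+1)) / (- real (2*k+1))"
      unfolding cc_def by simp
    also have "b powr (- real (2*k+1)) = 1 / b ^ (2*k+1)"
      by (simp only: powr_minus powr_realpow[OF b]) (simp add: divide_inverse)
    finally have "cc b 0 (2*k+2) = 1 / b ^ (2*k+1) / (- real (2*k+1))" .
    also have "\<dots> = - (1 / b ^ (2*k+1) / real (2*k+1))" by (rule divide_minus_right)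
    finally have c: "cc b 0 (2*k+2) = - (1 / b ^ (2*k+1) / real (2*k+1))" .
    have p: "(\<omega> / b) ^ (k*2+1) = \<omega> ^ (2*k) * \<omega> / b ^ (2*k+1)"
      by (simp add: power_divide mult.commute[of k 2])
    have r: "real (k*2+1) = real (2*k+1)" by (simp add: mult.commute)
    show ?thesis unfolding W_def c p r
      by (rule aux0) (use assms in auto)
  qed
  have "(\<lambda>k. W \<omega> b 0 k) sums (- (1 / \<omega>) * arctan (\<omega> / b))"
    unfolding w arctan_series[OF x1]
    by (intro sums_mult summable_sums summable_arctan_series x1)
  then show ?thesis using W_summable[OF assms, of 0] sums_unique2 by blast
qed

lemma I0:
  assumes "0 < \<omega>" "\<omega> < b"
  shows "Ii \<omega> b 0 = arctan (b / \<omega>) / \<omega>"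
proof -
  have "((\<lambda>x. x ^ 0 / (\<omega>\<^sup>2 + x\<^sup>2)) has_integral (arctan (b / \<omega>) / \<omega> - arctan (0 / \<omega>) / \<omega>)) {0..b}"
  proof (rule fundamental_theorem_of_calculus)
    show "0 \<le> b" using assms by simp
    fix x :: real assume "x \<in> {0..b}"
    have "((\<lambda>x. arctan (x / \<omega>) / \<omega>) has_real_derivative (inverse (1 + (x / \<omega>)\<^sup>2) * (1 / \<omega>)) / \<omega>) (at x)"
      by (intro derivative_eq_intros) (use assms in auto)
    moreover have "(inverse (1 + (x / \<omega>)\<^sup>2) * (1 / \<omega>)) / \<omega> = x ^ 0 / (\<omega>\<^sup>2 + x\<^sup>2)"
    proof -
      have A: "\<omega>\<^sup>2 * (1 + (x / \<omega>)\<^sup>2) = \<omega>\<^sup>2 + x\<^sup>2" using assms by (simp add: power_divide field_simps)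
      have "(inverse (1 + (x / \<omega>)\<^sup>2) * (1 / \<omega>)) / \<omega> = 1 / (\<omega>\<^sup>2 * (1 + (x / \<omega>)\<^sup>2))"
        by (simp add: power2_eq_square divide_inverse mult_ac)
      then show ?thesis unfolding A by simp
    qed
    ultimately show "((\<lambda>x. arctan (x / \<omega>) / \<omega>) has_vector_derivative x ^ 0 / (\<omega>\<^sup>2 + x\<^sup>2)) (at x within {0..b})"
      by (metis has_field_derivative_at_within has_real_derivative_iff_has_vector_derivative)
  qed
  then show ?thesis unfolding Ii_def by (simp add: integral_unique)
qed

lemma TIE0:
  assumes "0 < \<omega>" "\<omega> < b"
  shows "Tm \<omega> b 0 = Ii \<omega> b 0 - Em \<omega> 0"
proof -
  have "arctan (1 / (b / \<omega>)) = sgn (b / \<omega>) * pi / 2 - arctan (b / \<omega>)"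
    by (rule Transcendental.arctan_inverse) (use assms in auto)
  then have "arctan (\<omega> / b) = pi / 2 - arctan (b / \<omega>)" using assms by simp
  then show ?thesis unfolding T0[OF assms] I0[OF assms] Em_def using assms
    by (simp add: field_simps)
qed

lemma T1:
  assumes "0 < \<omega>" "\<omega> < b"
  shows "Tm \<omega> b 1 = ln b + ln (1 + (\<omega> / b)\<^sup>2) / 2"
proof -
  have b: "0 < b" using assms by simp
  define y where "y = (\<omega> / b)\<^sup>2"
  have y1: "\<bar>y\<bar> < 1"
  proof -
    have "\<omega> * \<omega> < b * b" using assms by (intro mult_strict_mono) auto
    then show ?thesis using assms by (simp add: y_def power_divide power2_eq_square)
  qed
  have ls: "(\<lambda>k. - ((-y) ^ Suc k) / of_nat (Suc k)) sums ln (1 + y)"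
    using ln_series'[OF y1] sums_Suc_iff[of "\<lambda>n. - ((-y)^n) / of_nat n"] by simp
  have w: "W \<omega> b 1 (Suc k) = (1/2) * (- ((-y) ^ Suc k) / of_nat (Suc k))" for k
  proof -
    have "cc b 1 (2 * Suc k + 2) = b powr (- real (2*k+2)) / (- real (2*k+2))"
      unfolding cc_def by simp
    also have "b powr (- real (2*k+2)) = 1 / b ^ (2*k+2)"
      by (simp only: powr_minus powr_realpow[OF b]) (simp add: divide_inverse)
    finally have "cc b 1 (2 * Suc k + 2) = 1 / b ^ (2*k+2) / (- real (2*k+2))" .
    also have "\<dots> = - (1 / b ^ (2*k+2) / real (2*k+2))" by (rule divide_minus_right)
    finally have c: "cc b 1 (2 * Suc k + 2) = - (1 / b ^ (2*k+2) / (2 * real (Suc k)))" by simp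
    have yp: "y ^ Suc k = \<omega> ^ (2*k+2) / b ^ (2*k+2)"
      unfolding y_def power_mult[symmetric] power_divide by simp
    have e3: "(- y) ^ Suc k = (-1) ^ Suc k * (\<omega> ^ (2*k+2) / b ^ (2*k+2))"
      unfolding yp[symmetric] by (rule power_minus)
    have e1: "\<omega> ^ (2 * Suc k) = \<omega> ^ (2*k+2)" by simp
    show ?thesis unfolding W_def c e3 e1
      by (rule aux1) (use b in auto)
  qed
  have "(\<lambda>k. W \<omega> b 1 (Suc k)) sums ((1/2) * ln (1 + y))"
    unfolding w by (rule sums_mult[OF ls])
  then have "(\<lambda>k. W \<omega> b 1 k) sums ((1/2) * ln (1 + y) + W \<omega> b 1 0)"
    by (simp only: sums_Suc_iff)
  moreover have "W \<omega> b 1 0 = ln b" by (simp add: W_def cc_def)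
  ultimately show ?thesis using W_summable[OF assms, of 1] sums_unique2 unfolding y_def by fastforce
qed

lemma I1:
  assumes "0 < \<omega>" "\<omega> < b"
  shows "Ii \<omega> b 1 = ln (\<omega>\<^sup>2 + b\<^sup>2) / 2 - ln (\<omega>\<^sup>2) / 2"
proof -
  have pos: "0 < \<omega>\<^sup>2 + x\<^sup>2" for x :: real using assms by (simp add: add_pos_nonneg)
  have "((\<lambda>x. x ^ 1 / (\<omega>\<^sup>2 + x\<^sup>2)) has_integral (ln (\<omega>\<^sup>2 + b\<^sup>2) / 2 - ln (\<omega>\<^sup>2 + 0\<^sup>2) / 2)) {0..b}"
  proof (rule fundamental_theorem_of_calculus)
    show "0 \<le> b" using assms by simp
    fix x :: real assume "x \<in> {0..b}"
    have "((\<lambda>x. ln (\<omega>\<^sup>2 + x\<^sup>2) / 2) has_real_derivative ((2 * x) / (\<omega>\<^sup>2 + x\<^sup>2)) / 2) (at x)"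
    proof -
      have g: "((\<lambda>x. \<omega>\<^sup>2 + x\<^sup>2) has_real_derivative 2 * x) (at x)"
        by (auto intro!: derivative_eq_intros)
      have "((\<lambda>x. ln (\<omega>\<^sup>2 + x\<^sup>2)) has_real_derivative 1 / (\<omega>\<^sup>2 + x\<^sup>2) * (2 * x)) (at x)"
        by (rule DERIV_chain2[OF DERIV_ln_divide[OF pos] g])
      then show ?thesis by (rule DERIV_cong[OF DERIV_cdivide]) simp
    qed
    moreover have "((2 * x) / (\<omega>\<^sup>2 + x\<^sup>2)) / 2 = x ^ 1 / (\<omega>\<^sup>2 + x\<^sup>2)"
      unfolding power_one_right by (metis nonzero_mult_div_cancel_left zero_neq_numeral times_divide_eq_right)
    ultimately show "((\<lambda>x. ln (\<omega>\<^sup>2 + x\<^sup>2) / 2) has_vector_derivative x ^ 1 / (\<omega>\<^sup>2 + x\<^sup>2)) (at x within {0..b})"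
      by (metis has_field_derivative_at_within has_real_derivative_iff_has_vector_derivative)
  qed
  then show ?thesis unfolding Ii_def by (simp add: integral_unique)
qed

lemma TIE1:
  assumes "0 < \<omega>" "\<omega> < b"
  shows "Tm \<omega> b 1 = Ii \<omega> b 1 - Em \<omega> 1"
proof -
  have b: "0 < b" using assms by simp
  have e: "Em \<omega> 1 = - ln \<omega>" using assms by (simp add: Em_def)
  have "1 + (\<omega> / b)\<^sup>2 = (\<omega>\<^sup>2 + b\<^sup>2) / b\<^sup>2" using b by (simp add: field_simps power_divide)
  then have l1: "ln (1 + (\<omega> / b)\<^sup>2) = ln (\<omega>\<^sup>2 + b\<^sup>2) - 2 * ln b"
    using assms by (simp add: ln_div add_pos_pos ln_realpow)
  have l2: "ln (\<omega>\<^sup>2) = 2 * ln \<omega>" using assms by (simp add: ln_realpow)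
  show ?thesis unfolding T1[OF assms] I1[OF assms] e l1 l2 by (simp add: field_simps)
qed

lemma TIE:
  assumes "0 < \<omega>" "\<omega> < b"
  shows "Tm \<omega> b n = Ii \<omega> b n - Em \<omega> n"
proof -
  have "Tm \<omega> b n = Ii \<omega> b n - Em \<omega> n \<and> Tm \<omega> b (Suc n) = Ii \<omega> b (Suc n) - Em \<omega> (Suc n)"
  proof (induction n)
    case 0 then show ?case using TIE0[OF assms] TIE1[OF assms] by simp
  next
    case (Suc n)
    have h: "Tm \<omega> b n = Ii \<omega> b n - Em \<omega> n" using Suc.IH by simp
    have "Tm \<omega> b (n + 2) = Ii \<omega> b (n + 2) - Em \<omega> (n + 2)"
      unfolding T_rec[OF assms] I_rec[OF assms] E_rec h by (simp add: algebra_simps)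
    then show ?case using Suc.IH by simp
  qed
  then show ?thesis by blast
qed

theorem mainTheorem5:
  fixes F :: "complex \<Rightarrow> complex" and \<omega> a :: real
  assumes "F holomorphic_on UNIV"
    and "\<forall>x::real. F (complex_of_real x) \<in> \<real>"
    and "0 < \<omega>" and "\<omega> < a"
  shows "(\<lambda>k. (-1) ^ k * \<omega> ^ (2 * k) *
            finite_part (\<lambda>x. Re (F (complex_of_real x))) (2 * k + 2) a)
         sums (integral {0..a} (\<lambda>x. Re (F (complex_of_real x)) / (\<omega>\<^sup>2 + x\<^sup>2))
               - pi / (2 * \<omega>) * Re (F (\<i> * complex_of_real \<omega>))
               + ln \<omega> / \<omega> * Im (F (\<i> * complex_of_real \<omega>)))"
proof -
  have wa: "0 < \<omega>" "\<omega> < a" using assms(3,4) by auto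
  have a0: "0 < a" using wa by simp
  obtain co where cs: "\<And>z. (\<lambda>n. complex_of_real (co n) * z ^ n) sums F z"
    using entire_real_coeffs[OF assms(1,2)] by blast
  define f where "f = (\<lambda>x::real. Re (F (complex_of_real x)))"
  have fs: "(\<lambda>n. co n * x ^ n) sums f x" for x
    using sums_Re[OF cs[of "complex_of_real x"]] by (simp add: f_def flip: of_real_power)
  have ab: "summable (\<lambda>n. \<bar>co n\<bar> * r ^ n)" if r: "0 \<le> r" for r
  proof -
    have "summable (\<lambda>n. complex_of_real (co n) * (complex_of_real (r + 1)) ^ n)"
      using cs sums_summable by blast
    then have "summable (\<lambda>n. norm (complex_of_real (co n) * (complex_of_real r) ^ n))"
      by (rule powser_insidea) (use r in simp)
    then show ?thesis using r by (simp add: norm_mult norm_power)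
  qed
  have fp: "finite_part f (2 * k + 2) a = (\<Sum>n. co n * cc a n (2 * k + 2))" for k
  proof -
    have "has_finite_part f (Suc (2 * k + 1)) a (\<Sum>n. co n * cc a n (Suc (2 * k + 1)))"
      by (rule fp_series[OF a0 fs ab]) (use a0 in simp)
    then show ?thesis by (intro finite_part_eq) simp
  qed
  define Kb where "Kb = (1 + \<bar>ln a\<bar>) / a"
  define X where "X = integral {0..a} (\<lambda>x. f x / (\<omega>\<^sup>2 + x\<^sup>2))
               - pi / (2 * \<omega>) * Re (F (\<i> * complex_of_real \<omega>))
               + ln \<omega> / \<omega> * Im (F (\<i> * complex_of_real \<omega>))"
  have "(\<lambda>k. (-1) ^ k * \<omega> ^ (2 * k) * finite_part f (2 * k + 2) a) sums X"
  proof (rule double_series[where G = "\<lambda>n k. co n * W \<omega> a n k"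
        and u = "\<lambda>n. \<bar>co n\<bar> * (Kb * a ^ n)" and v = "\<lambda>k. ((\<omega> / a)\<^sup>2) ^ k"
        and R = "\<lambda>n. co n * Tm \<omega> a n"])
    fix n k
    have "\<bar>co n * W \<omega> a n k\<bar> = \<bar>co n\<bar> * \<bar>W \<omega> a n k\<bar>" by (simp add: abs_mult)
    also have "\<dots> \<le> \<bar>co n\<bar> * ((Kb * a ^ n) * ((\<omega> / a)\<^sup>2) ^ k)"
      unfolding Kb_def by (intro mult_left_mono W_bound wa) simp
    finally show "\<bar>co n * W \<omega> a n k\<bar> \<le> \<bar>co n\<bar> * (Kb * a ^ n) * ((\<omega> / a)\<^sup>2) ^ k"
      by (simp add: mult_ac)
  next
    show "summable (\<lambda>n. \<bar>co n\<bar> * (Kb * a ^ n))"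
      using summable_mult2[OF ab[of a], of Kb] a0 by (simp add: mult_ac)
  next
    have "\<omega> * \<omega> < a * a" using wa by (intro mult_strict_mono) auto
    then have "norm ((\<omega> / a)\<^sup>2) < 1" using wa by (simp add: power_divide power2_eq_square)
    then show "summable (\<lambda>k. ((\<omega> / a)\<^sup>2) ^ k)" by (rule summable_geometric)
  next
    show "0 \<le> \<bar>co n\<bar> * (Kb * a ^ n)" for n using a0 by (simp add: Kb_def)
  next
    show "0 \<le> ((\<omega> / a)\<^sup>2) ^ k" for k by simp
  next
    show "(\<lambda>k. co n * W \<omega> a n k) sums (co n * Tm \<omega> a n)" for n
      by (rule sums_mult[OF W_summable[OF wa]])
  next
    fix k
    have "(\<lambda>n. co n * cc a n (2 * k + 2)) sums (\<Sum>n. co n * cc a n (2 * k + 2))"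
      by (intro summable_sums cc_summable[OF a0 order_refl ab]) (use a0 in simp)
    then have "(\<lambda>n. ((-1) ^ k * \<omega> ^ (2 * k)) * (co n * cc a n (2 * k + 2))) sums
        (((-1) ^ k * \<omega> ^ (2 * k)) * (\<Sum>n. co n * cc a n (2 * k + 2)))"
      by (rule sums_mult)
    then show "(\<lambda>n. co n * W \<omega> a n k) sums ((-1) ^ k * \<omega> ^ (2 * k) * finite_part f (2 * k + 2) a)"
      unfolding fp W_def by (simp add: mult_ac)
  next
    have pos: "\<omega>\<^sup>2 + x\<^sup>2 \<noteq> 0" for x :: real using wa by (simp add: add_pos_nonneg)
    have I: "(\<lambda>n. co n * Ii \<omega> a n) sums integral {0..a} (\<lambda>x. f x / (\<omega>\<^sup>2 + x\<^sup>2))"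
    proof -
      have "(\<lambda>n. integral {0..a} (\<lambda>x. co n * (x ^ n / (\<omega>\<^sup>2 + x\<^sup>2)))) sums
          integral {0..a} (\<lambda>x. \<Sum>n. co n * (x ^ n / (\<omega>\<^sup>2 + x\<^sup>2)))"
      proof (rule integral_series[where M = "\<lambda>n. \<bar>co n\<bar> * a ^ n * (1 / \<omega>\<^sup>2)"])
        show "continuous_on {0..a} (\<lambda>x. co n * (x ^ n / (\<omega>\<^sup>2 + x\<^sup>2)))" for n
          by (intro continuous_intros) (use pos in auto)
        show "summable (\<lambda>n. \<bar>co n\<bar> * a ^ n * (1 / \<omega>\<^sup>2))" by (intro summable_mult2 ab) (use a0 in simp)
        fix n x assume x: "x \<in> {0..a}"
        have "\<bar>co n * (x ^ n / (\<omega>\<^sup>2 + x\<^sup>2))\<bar> = \<bar>co n\<bar> * (x ^ n / (\<omega>\<^sup>2 + x\<^sup>2))"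
          using x wa by (simp add: abs_mult add_pos_nonneg)
        also have "\<dots> \<le> \<bar>co n\<bar> * (a ^ n / \<omega>\<^sup>2)"
          using x wa by (intro mult_left_mono frac_le power_mono) auto
        finally show "\<bar>co n * (x ^ n / (\<omega>\<^sup>2 + x\<^sup>2))\<bar> \<le> \<bar>co n\<bar> * a ^ n * (1 / \<omega>\<^sup>2)" by simp
      qed
      moreover have "integral {0..a} (\<lambda>x. co n * (x ^ n / (\<omega>\<^sup>2 + x\<^sup>2))) = co n * Ii \<omega> a n" for n
        unfolding Ii_def using integral_cmul[of "{0..a}" "co n" "\<lambda>x. x ^ n / (\<omega>\<^sup>2 + x\<^sup>2)"]
        by (simp only: real_scaleR_def)
      moreover have "(\<Sum>n. co n * (x ^ n / (\<omega>\<^sup>2 + x\<^sup>2))) = f x / (\<omega>\<^sup>2 + x\<^sup>2)" for x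
        using sums_divide[OF fs[of x], of "\<omega>\<^sup>2 + x\<^sup>2"] by (simp add: sums_iff)
      ultimately show ?thesis by simp
    qed
    define z where "z = \<i> * complex_of_real \<omega>"
    have re: "(\<lambda>n. co n * Re (z ^ n)) sums Re (F z)"
      using sums_Re[OF cs[of z]] by simp
    have im: "(\<lambda>n. co n * Im (z ^ n)) sums Im (F z)"
      using sums_Im[OF cs[of z]] by simp
    have E: "(\<lambda>n. co n * Em \<omega> n) sums (pi / (2 * \<omega>) * Re (F z) - ln \<omega> / \<omega> * Im (F z))"
    proof -
      have "(\<lambda>n. pi / (2 * \<omega>) * (co n * Re (z ^ n)) - ln \<omega> / \<omega> * (co n * Im (z ^ n))) sums
          (pi / (2 * \<omega>) * Re (F z) - ln \<omega> / \<omega> * Im (F z))"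
        by (intro sums_diff sums_mult re im)
      moreover have "pi / (2 * \<omega>) * (co n * Re (z ^ n)) - ln \<omega> / \<omega> * (co n * Im (z ^ n)) = co n * Em \<omega> n" for n
        unfolding Em_def z_def by (simp add: algebra_simps)
      ultimately show ?thesis by simp
    qed
    have "(\<lambda>n. co n * Ii \<omega> a n - co n * Em \<omega> n) sums
        (integral {0..a} (\<lambda>x. f x / (\<omega>\<^sup>2 + x\<^sup>2)) - (pi / (2 * \<omega>) * Re (F z) - ln \<omega> / \<omega> * Im (F z)))"
      by (rule sums_diff[OF I E])
    moreover have "co n * Ii \<omega> a n - co n * Em \<omega> n = co n * Tm \<omega> a n" for n
      unfolding TIE[OF wa] by (simp add: algebra_simps)
    ultimately show "(\<lambda>n. co n * Tm \<omega> a n) sums X" unfolding X_def z_def by (simp add: algebra_simps)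
  qed
  then show ?thesis unfolding X_def f_def .
qed

end
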